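(* For every infinite compact Hausdorff space $K$ there exists a point $p\in K$ such that $C(K,p)=\{f\in C(K):f(p)=0\}$ fails the ball fixed point property.
   Context: $C(K)$ is the real Banach space of continuous functions on $K$ with the sup norm, and $C(K,p)$ carries the restricted norm. A real Banach space $X$ has the ball fixed point property (BFPP) if every nonexpansive map $T\colon B_X\to B_X$ (i.e. $\|Tx-Ty\|\le\|x-y\|$) has a fixed point, where $B_X$ is the closed unit ball. *)

theory Defs
  imports "HOL-Analysis.Analysis"
begin

text \<open>C(K) for compact K: every continuous real function on a compact space is bounded,
  so C(K) with the sup norm is the space of bounded continuous functions.\<close>

definition C_Kp :: "'a::topological_space \<Rightarrow> ('a \<Rightarrow>\<^sub>C real) set" where
  "C_Kp p = {f. apply_bcontfun f p = 0}"

definition ball_fpp :: "'v::real_normed_vector set \<Rightarrow> bool" where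
  "ball_fpp S \<longleftrightarrow>
     (\<forall>T. (\<forall>x\<in>S \<inter> cball 0 1. T x \<in> S \<inter> cball 0 1) \<and>
          (\<forall>x\<in>S \<inter> cball 0 1. \<forall>y\<in>S \<inter> cball 0 1. norm (T x - T y) \<le> norm (x - y))
        \<longrightarrow> (\<exists>x\<in>S \<inter> cball 0 1. T x = x))"

end

theory Submission
  imports Defs
begin

lemma Haus_euc: "Hausdorff_space (euclidean :: 'a::t2_space topology)"
  unfolding Hausdorff_space_def disjnt_def using hausdorff by fastforce

lemma cs_euc: assumes "compact (UNIV :: 'a::topological_space set)"
  shows "compact_space (euclidean :: 'a topology)"
  using assms by (simp add: compact_space_def)

lemma urys:
  fixes x :: "'a::t2_space"
  assumes "compact (UNIV::'a set)" "finite F" "x \<notin> F"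
  shows "\<exists>h::'a\<Rightarrow>real. continuous_on UNIV h \<and> (\<forall>y. 0 \<le> h y \<and> h y \<le> 1) \<and> h x = 1 \<and> (\<forall>y\<in>F. h y = 0)"
proof -
  have N: "normal_space (euclidean :: 'a topology)"
    using compact_Hausdorff_or_regular_imp_normal_space cs_euc[OF assms(1)] Haus_euc by blast
  obtain f where f: "continuous_map euclidean (top_of_set {0..1::real}) f" "f ` F \<subseteq> {0}" "f ` {x} \<subseteq> {1}"
    apply (rule Urysohn_lemma[OF N, of F "{x}" 0 1])
    using assms finite_imp_closed by (auto simp: disjnt_def)
  have "continuous_on UNIV f" "\<forall>y. f y \<in> {0..1}"
    using f(1) by (auto simp: continuous_map_in_subtopology)
  then show ?thesis using f(2,3) by (intro exI[of _ f]) auto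
qed

lemma exists_g:
  assumes "compact (UNIV :: 'a::t2_space set)" "infinite (UNIV :: 'a set)"
  shows "\<exists>(g::'a\<Rightarrow>real) q. continuous_on UNIV g \<and> (\<forall>y. 0 \<le> g y) \<and> g q = 0 \<and>
           (\<forall>U. open U \<and> q \<in> U \<longrightarrow> (\<exists>y\<in>U. g y > 0))"
proof -
  obtain x :: "nat \<Rightarrow> 'a" where inj: "inj x"
    using infinite_countable_subset[OF assms(2)] by blast
  have "\<forall>n. \<exists>h::'a\<Rightarrow>real. continuous_on UNIV h \<and> (\<forall>y. 0 \<le> h y \<and> h y \<le> 1) \<and> h (x n) = 1 \<and> (\<forall>y\<in>x ` {..<n}. h y = 0)"
  proof
    fix n
    have "x n \<notin> x ` {..<n}" using inj by (auto simp: inj_eq)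
    then show "\<exists>h::'a\<Rightarrow>real. continuous_on UNIV h \<and> (\<forall>y. 0 \<le> h y \<and> h y \<le> 1) \<and> h (x n) = 1 \<and> (\<forall>y\<in>x ` {..<n}. h y = 0)"
      using urys[OF assms(1)] by blast
  qed
  then obtain h :: "nat \<Rightarrow> 'a \<Rightarrow> real" where
    hc: "\<And>n. continuous_on UNIV (h n)" and hb: "\<And>n y. 0 \<le> h n y \<and> h n y \<le> 1"
    and h1: "\<And>n. h n (x n) = 1" and h0: "\<And>n m. m < n \<Longrightarrow> h n (x m) = 0"
    by (metis lessThan_iff image_eqI)
  have "infinite (range x)" using inj range_inj_infinite by blast
  then obtain q where q: "q islimpt range x"
    using Heine_Borel_imp_Bolzano_Weierstrass[OF assms(1)] by blast
  define t where "t n y = (1/2::real)^n * \<bar>h n y - h n q\<bar>" for n y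
  define g where "g y = (\<Sum>n. t n y)" for y
  have tb: "norm (t n y) \<le> (1/2)^n" for n y
  proof -
    have "\<bar>h n y - h n q\<bar> \<le> 1" using hb[of n y] hb[of n q] by auto
    then show ?thesis unfolding t_def by (simp add: mult_left_le)
  qed
  have t0: "t n y \<ge> 0" for n y unfolding t_def by simp
  have sm: "summable (\<lambda>n. t n y)" for y
    by (rule summable_comparison_test[of _ "\<lambda>n. (1/2::real)^n"]) (use tb in auto)
  have gc: "continuous_on UNIV g"
  proof (rule uniform_limit_theorem)
    show "uniform_limit UNIV (\<lambda>n y. \<Sum>i<n. t i y) g sequentially"
      unfolding g_def by (rule Weierstrass_m_test[of _ _ "\<lambda>n. (1/2)^n"]) (use tb in auto)
    show "\<forall>\<^sub>F n in sequentially. continuous_on UNIV (\<lambda>y. \<Sum>i<n. t i y)"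
      unfolding t_def by (intro always_eventually allI continuous_intros hc)
  qed auto
  have gnn: "g y \<ge> 0" for y unfolding g_def using sm t0 by (simp add: suminf_nonneg)
  have gq: "g q = 0" unfolding g_def t_def by simp
  have gz: "h n y = h n q" if "g y = 0" for y n
  proof -
    have "\<forall>n. t n y = 0" using that sm[of y] t0 unfolding g_def by (simp add: suminf_eq_zero_iff)
    then show ?thesis unfolding t_def by simp
  qed
  have "\<exists>y\<in>U. g y > 0" if U: "open U" "q \<in> U" for U
  proof -
    obtain ya where ya: "ya \<in> range x" "ya \<in> U" "ya \<noteq> q"
      using q[unfolded islimpt_def, rule_format, OF U(2) U(1)] by blast
    then obtain a where a: "ya = x a" by blast
    have U2: "open (U - {x a})" using U by (simp add: open_delete)
    have "q \<in> U - {x a}" using U ya a by simp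
    then obtain yb where yb: "yb \<in> range x" "yb \<in> U - {x a}" "yb \<noteq> q"
      using q[unfolded islimpt_def, rule_format, OF _ U2] by blast
    then obtain b where b: "yb = x b" by blast
    have ab: "a \<noteq> b" using yb b by blast
    show ?thesis
    proof (rule ccontr)
      assume na: "\<not> ?thesis"
      have "\<not> g (x a) > 0" using na ya(2) unfolding a by blast
      then have ga: "g (x a) = 0" using gnn[of "x a"] by linarith
      have "\<not> g (x b) > 0" using na yb(2) unfolding b by blast
      then have gb: "g (x b) = 0" using gnn[of "x b"] by linarith
      have hab: "h n (x a) = h n (x b)" for n using gz[OF ga, of n] gz[OF gb, of n] by simp
      show False
      proof (cases "a < b")
        case True
        then show False using hab[of b] h1[of b] h0[of a b] by simp
      next
        case False
        then have "b < a" using ab by simp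
        then show False using hab[of a] h1[of a] h0[of b a] by simp
      qed
    qed
  qed
  then show ?thesis using gc gnn gq by blast
qed


theorem mainTheorem17:
  assumes "compact (UNIV :: 'a::t2_space set)"
    and "infinite (UNIV :: 'a set)"
  shows "\<exists>p::'a. \<not> ball_fpp (C_Kp p)"
proof -
  obtain g :: "'a \<Rightarrow> real" and q where gc: "continuous_on UNIV g" and gnn: "\<And>y. 0 \<le> g y"
    and gq: "g q = 0" and gacc: "\<And>U. open U \<Longrightarrow> q \<in> U \<Longrightarrow> \<exists>y\<in>U. g y > 0"
    using exists_g[OF assms] by blast
  define B where "B = C_Kp q \<inter> cball (0::'a \<Rightarrow>\<^sub>C real) 1"
  define T :: "('a \<Rightarrow>\<^sub>C real) \<Rightarrow> ('a \<Rightarrow>\<^sub>C real)" where "T f = Bcontfun (\<lambda>y. min 1 (apply_bcontfun f y + g y))" for f :: "'a \<Rightarrow>\<^sub>C real"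
  have fb: "\<bar>apply_bcontfun f y\<bar> \<le> 1" if "f \<in> B" for f y
  proof -
    have "norm f \<le> 1" using that unfolding B_def by (simp add: dist_norm)
    then show ?thesis using norm_bounded[of f y] by simp
  qed
  have Tap: "apply_bcontfun (T f) = (\<lambda>y. min 1 (apply_bcontfun f y + g y))" if "f \<in> B" for f
  proof -
    have "(\<lambda>y. min 1 (apply_bcontfun f y + g y)) \<in> bcontfun"
    proof (rule bcontfun_normI)
      show "continuous_on UNIV (\<lambda>y. min 1 (apply_bcontfun f y + g y))"
        by (intro continuous_intros gc continuous_on_apply_bcontfun)
      show "norm (min 1 (apply_bcontfun f y + g y)) \<le> 1" for y
        using fb[OF that, of y] gnn[of y] by simp
    qed
    then show ?thesis unfolding T_def by (simp add: Bcontfun_inverse)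
  qed
  have TB: "T f \<in> B" if "f \<in> B" for f
  proof -
    have fq: "apply_bcontfun f q = 0" using that unfolding B_def C_Kp_def by simp
    have "apply_bcontfun (T f) q = 0" using Tap[OF that] fq gq by simp
    moreover have "norm (T f) \<le> 1"
    proof (rule norm_bound)
      show "norm (apply_bcontfun (T f) y) \<le> 1" for y
        using Tap[OF that] fb[OF that, of y] gnn[of y] by simp
    qed
    ultimately show ?thesis unfolding B_def C_Kp_def by (simp add: dist_norm)
  qed
  have TL: "norm (T f - T h) \<le> norm (f - h)" if "f \<in> B" "h \<in> B" for f h
  proof (rule norm_bound)
    fix y
    have "norm (apply_bcontfun (T f - T h) y) = \<bar>min 1 (apply_bcontfun f y + g y) - min 1 (apply_bcontfun h y + g y)\<bar>"
      using Tap[OF that(1)] Tap[OF that(2)] by simp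
    also have "\<dots> \<le> \<bar>apply_bcontfun f y - apply_bcontfun h y\<bar>" by (simp add: min_def abs_if)
    also have "\<dots> = norm (apply_bcontfun (f - h) y)" by simp
    also have "\<dots> \<le> norm (f - h)" by (rule norm_bounded)
    finally show "norm (apply_bcontfun (T f - T h) y) \<le> norm (f - h)" .
  qed
  have nofix: "T f \<noteq> f" if "f \<in> B" for f
  proof
    assume fx: "T f = f"
    have fq: "apply_bcontfun f q = 0" using that unfolding B_def C_Kp_def by simp
    have one: "apply_bcontfun f y = 1" if "g y > 0" for y
    proof -
      have "min 1 (apply_bcontfun f y + g y) = apply_bcontfun f y"
        using Tap[OF \<open>f \<in> B\<close>] fx by (metis)
      then show ?thesis using that by (simp add: min_def split: if_splits)
    qed
    have "open (apply_bcontfun f -` {..<1})"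
      by (rule open_vimage) (auto intro: continuous_on_apply_bcontfun)
    moreover have "q \<in> apply_bcontfun f -` {..<1}" using fq by simp
    ultimately obtain y where "y \<in> apply_bcontfun f -` {..<1}" "g y > 0" using gacc by blast
    then show False using one by simp
  qed
  have "\<not> ball_fpp (C_Kp q)"
    unfolding ball_fpp_def B_def[symmetric]
    using TB TL nofix by blast
  then show ?thesis by blast
qed

end
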